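(* For $n\ge1$ and $0\le k\le n$: (a) the coefficients $b_{n,k}$ are integers; (b) $a_{n,k}\ge0$ and $b_{n,k}\ge0$; (c) $a_{n,k-1}\le a_{n,k}$ for $1\le k\le n$; (d) $a_{n,0}=(n-1)!$.
   Context: Let $V$ be the unique solution, in the ring of formal series $\sum_{n\ge0}q_n(y)x^{-n}$ with $q_n$ complex polynomials of degree $\le n$, of $V=1+\frac{y}{x}-\frac{1}{x}V-V_x-\frac{1}{x}V_y+\frac{1}{x}\log V$ (termwise formal derivatives $V_x,V_y$; formal logarithm series). Define polynomials $P_{n-1}$, $Q_n$ by $V=1+\sum_{n\ge1}P_{n-1}(y)x^{-n}$, $\log V=\sum_{n\ge1}Q_n(y)x^{-n}$; equivalently $P_0=y-1$ and $P_n=nP_{n-1}-P'_{n-1}+\frac1n\sum_{k=1}^{n-1}k\{(k-1)P_{k-1}-P_k-P'_{k-1}\}P_{n-k-1}$. For $n\ge1$ define $a_{n,k},b_{n,k}$ ($0\le k\le n$) by $P_n(y)=\frac{(-1)^{n+1}}{n!}\sum_{k=0}^n(-1)^ka_{n,k}y^{n-k}$ and $Q_n(y)=\frac{(-1)^{n+1}}{n!}\sum_{k=0}^n(-1)^kb_{n,k}y^{n-k}$. *)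

theory Defs
  imports "HOL-Computational_Algebra.Computational_Algebra"
begin

function P :: "nat \<Rightarrow> real poly" where
  "P 0 = [:-1, 1:]"
| "P (Suc m) =
     smult (real (Suc m)) (P m) - pderiv (P m)
     + smult (1 / real (Suc m))
         (\<Sum>k\<in>{1..m}. smult (real k)
             (smult (real k - 1) (P (k - 1)) - P k - pderiv (P (k - 1))) * P (Suc m - k - 1))"
  by pat_completeness auto
termination
  by (relation "measure id") auto

text \<open>W = V - 1 = sum_{n>=1} P_{n-1} t^n as a formal power series in t = 1/x
  with coefficients in real polynomials in y.\<close>
definition W :: "real poly fps" where
  "W = Abs_fps (\<lambda>n. if n = 0 then 0 else P (n - 1))"

text \<open>Q_n = coefficient of t^n in the formal logarithm
  log V = log (1 + W) = sum_{m>=1} (-1)^(m+1) W^m / m.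
  Only m \<le> n contribute since W has zero constant term.\<close>
definition Q :: "nat \<Rightarrow> real poly" where
  "Q n = (\<Sum>m\<in>{1..n}. smult ((-1) ^ (m + 1) / real m) (fps_nth (W ^ m) n))"

text \<open>P_n(y) = (-1)^(n+1)/n! * sum_k (-1)^k a_{n,k} y^(n-k), similarly for Q_n and b.\<close>
definition a :: "nat \<Rightarrow> nat \<Rightarrow> real" where
  "a n k = (-1) ^ (n + 1 + k) * fact n * coeff (P n) (n - k)"

definition b :: "nat \<Rightarrow> nat \<Rightarrow> real" where
  "b n k = (-1) ^ (n + 1 + k) * fact n * coeff (Q n) (n - k)"

end

theory Submission
  imports Defs
begin


definition ydiff :: "real poly fps \<Rightarrow> real poly fps" where
  "ydiff F = Abs_fps (\<lambda>n. pderiv (F $ n))"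

lemma ydiff_nth [simp]: "ydiff F $ n = pderiv (F $ n)"
  by (simp add: ydiff_def)

lemma pderiv_sum': "pderiv (sum f A) = (\<Sum>i\<in>A. pderiv (f i))"
  by (induct A rule: infinite_finite_induct) (auto simp: pderiv_add)

lemma ydiff_add [simp]: "ydiff (F + G) = ydiff F + ydiff G"
  by (rule fps_ext) (simp add: pderiv_add)
lemma ydiff_diff [simp]: "ydiff (F - G) = ydiff F - ydiff G"
  by (rule fps_ext) (simp add: pderiv_diff)
lemma ydiff_minus [simp]: "ydiff (- F) = - ydiff F"
  by (rule fps_ext) (simp add: pderiv_minus)
lemma ydiff_mult: "ydiff (F * G) = ydiff F * G + F * ydiff G"
proof (rule fps_ext)
  fix n
  have "ydiff (F*G) $ n = (\<Sum>i=0..n. pderiv (F$i) * G$(n-i)) + (\<Sum>i=0..n. F$i * pderiv (G$(n-i)))"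
    by (simp add: fps_mult_nth pderiv_sum' pderiv_mult sum.distrib[symmetric] algebra_simps)
  also have "\<dots> = (ydiff F * G + F * ydiff G) $ n" by (simp only: fps_add_nth fps_mult_nth ydiff_nth)
  finally show "ydiff (F*G) $ n = (ydiff F * G + F * ydiff G) $ n" .
qed
lemma ydiff_one [simp]: "ydiff 1 = 0"
  by (rule fps_ext) (simp add: fps_one_nth)
lemma ydiff_X [simp]: "ydiff fps_X = 0"
  by (rule fps_ext) (simp add: fps_X_def)
lemma ydiff_const [simp]: "ydiff (fps_const c) = fps_const (pderiv c)"
  by (rule fps_ext) simp
lemma ydiff_Xmult [simp]: "ydiff (fps_X * F) = fps_X * ydiff F"
  by (simp add: ydiff_mult)
lemma ydiff_deriv: "ydiff (fps_deriv F) = fps_deriv (ydiff F)"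
  by (rule fps_ext) (simp add: pderiv_smult of_nat_poly pderiv_mult)
lemma ydiff_power: "ydiff (F ^ m) = of_nat m * ydiff F * F ^ (m - 1)"
proof (induct m)
  case (Suc m) then show ?case by (cases m) (auto simp: ydiff_mult algebra_simps)
qed simp



lemma ofnat_poly_mult: "(of_nat n :: real poly) * p = smult (real n) p"
  by (simp add: of_nat_poly)

lemma deriv_nth': "fps_deriv (F :: real poly fps) $ n = smult (real (Suc n)) (F $ Suc n)"
  by (simp only: fps_deriv_nth ofnat_poly_mult Suc_eq_plus1)

definition Lam :: "real poly fps" where
  "Lam = Abs_fps (\<lambda>m. if m = 0 then 0 else P m - smult (real m - 1) (P (m-1)) + pderiv (P (m-1)))"

lemma W_nth: "W $ n = (if n = 0 then 0 else P (n-1))"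
  by (simp add: W_def)

lemma V_nth: "(1+W) $ n = (if n = 0 then 1 else P (n-1))"
  by (simp add: W_def fps_one_nth)

lemma Lam_nth: "Lam $ n = (if n = 0 then 0 else P n - smult (real n - 1) (P (n-1)) + pderiv (P (n-1)))"
  by (simp add: Lam_def)

lemma P_Suc': "P (Suc m) = smult (real (Suc m)) (P m) - pderiv (P m)
   - smult (1/real (Suc m)) (\<Sum>k\<in>{1..m}. smult (real k) (Lam $ k * P (m - k)))"
proof -
  have "(\<Sum>k\<in>{1..m}. smult (real k)
             (smult (real k - 1) (P (k - 1)) - P k - pderiv (P (k - 1))) * P (Suc m - k - 1))
      = (\<Sum>k\<in>{1..m}. - smult (real k) (Lam $ k * P (m - k)))"
    by (rule sum.cong) (auto simp: Lam_nth smult_diff_right smult_add_right algebra_simps)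
  then show ?thesis by (simp add: sum_negf)
qed

declare P.simps(2) [simp del]

lemma rec_fps: "(1+W) * fps_deriv Lam = fps_deriv (1+W)"
proof (rule fps_ext)
  fix j
  define S where "S = (\<Sum>k\<in>{1..j}. smult (real k) (Lam $ k * P (j - k)))"
  have "((1+W) * fps_deriv Lam) $ j = (\<Sum>i=0..j. (1+W)$i * fps_deriv Lam $ (j-i))"
    by (simp add: fps_mult_nth)
  also have "\<dots> = fps_deriv Lam $ j + (\<Sum>i=Suc 0..j. P (i-1) * fps_deriv Lam $ (j-i))"
    by (simp add: sum.atLeast_Suc_atMost W_nth fps_one_nth)
  also have "(\<Sum>i=Suc 0..j. P (i-1) * fps_deriv Lam $ (j-i)) = (\<Sum>i=Suc 0..j. P (j - i) * fps_deriv Lam $ (i - 1))"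
    by (subst sum.atLeastAtMost_rev) (rule sum.cong, auto simp: Suc_diff_le)
  also have "\<dots> = S"
    unfolding S_def by (rule sum.cong) (auto simp: deriv_nth' ofnat_poly_mult algebra_simps)
  also have "fps_deriv Lam $ j = smult (real j + 1) (P (Suc j) - smult (real j) (P j) + pderiv (P j))"
    by (simp only: deriv_nth' Lam_nth) (simp add: add.commute del: P.simps)
  also have "smult (real (Suc j)) (P (Suc j)) = smult ((real j + 1)^2) (P j) - smult (real j + 1) (pderiv (P j)) - S"
    by (subst P_Suc') (simp add: S_def smult_diff_right smult_add_right smult_smult power2_eq_square algebra_simps del: P.simps)
  hence "smult (real j + 1) (P (Suc j) - smult (real j) (P j) + pderiv (P j)) + S
       = smult ((real j + 1)^2) (P j) - smult ((real j + 1) * real j) (P j)"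
    by (simp add: smult_diff_right smult_add_right smult_smult algebra_simps)
  also have "\<dots> = smult ((real j + 1)^2 - (real j + 1) * real j) (P j)"
    by (simp only: smult_diff_left)
  also have "(real j + 1)^2 - (real j + 1) * real j = real j + 1"
    by (simp add: power2_eq_square algebra_simps)
  also have "smult (real j + 1) (P j) = fps_deriv (1+W) $ j"
    by (simp only: deriv_nth' V_nth) (simp add: add.commute)
  finally show "((1+W) * fps_deriv Lam) $ j = fps_deriv (1+W) $ j" .
qed

lemma rec_coeff: "smult (real j + 1) (Lam $ Suc j) + (\<Sum>k\<in>{1..j}. smult (real k) (Lam $ k * P (j - k)))
    = smult (real j + 1) (P j)"
proof -
  define S where "S = (\<Sum>k\<in>{1..j}. smult (real k) (Lam $ k * P (j - k)))"
  have "smult (real (Suc j)) (P (Suc j)) = smult ((real j + 1)^2) (P j) - smult (real j + 1) (pderiv (P j)) - S"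
    by (subst P_Suc') (simp add: S_def smult_diff_right smult_add_right smult_smult power2_eq_square algebra_simps del: P.simps)
  hence "smult (real j + 1) (P (Suc j) - smult (real j) (P j) + pderiv (P j)) + S
       = smult ((real j + 1)^2) (P j) - smult ((real j + 1) * real j) (P j)"
    by (simp add: smult_diff_right smult_add_right smult_smult algebra_simps)
  also have "\<dots> = smult ((real j + 1)^2 - (real j + 1) * real j) (P j)"
    by (simp only: smult_diff_left)
  also have "(real j + 1)^2 - (real j + 1) * real j = real j + 1"
    by (simp add: power2_eq_square algebra_simps)
  finally show ?thesis by (simp add: S_def Lam_nth)
qed



definition L :: "real poly fps" where "L = Abs_fps Q"
definition cc :: "nat \<Rightarrow> real poly fps" where "cc m = fps_const [:(-1)^(m+1) / real m:]"
definition LN :: "nat \<Rightarrow> real poly fps" where "LN N = (\<Sum>m\<in>{1..N}. cc m * W^m)"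

lemma W0 [simp]: "W $ 0 = 0" by (simp add: W_def)

lemma Wpow_zero: "n < m \<Longrightarrow> (W^m) $ n = 0"
  using startsby_zero_power_prefix[OF W0] by blast

lemma mWpow_zero: "n < m \<Longrightarrow> ((-W)^m) $ n = 0"
  using startsby_zero_power_prefix[of "-W"] by simp

lemma cc_nth: "(cc m * F) $ n = smult ((-1)^(m+1) / real m) (F $ n)"
  by (simp add: cc_def)

lemma LN_nth: "n \<le> N \<Longrightarrow> LN N $ n = Q n"
proof -
  assume nN: "n \<le> N"
  have "LN N $ n = (\<Sum>m\<in>{1..N}. smult ((-1)^(m+1) / real m) ((W^m) $ n))"
    by (simp add: LN_def fps_sum_nth cc_nth)
  also have "\<dots> = (\<Sum>m\<in>{1..n}. smult ((-1)^(m+1) / real m) ((W^m) $ n))"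
    by (rule sum.mono_neutral_right) (use nN in \<open>auto simp: Wpow_zero\<close>)
  finally show ?thesis by (simp add: Q_def)
qed

lemma mult_nth_cong: "(\<And>i. i \<le> n \<Longrightarrow> F$i = G$i) \<Longrightarrow> (A*F)$n = (A*G)$n"
  by (simp add: fps_mult_nth)

lemma pm1: "([:-1:] :: real poly) = -1"
  by (simp add: one_pCons)

lemma cc_mult: "1 \<le> m \<Longrightarrow> cc m * of_nat m = (-1)^(m-1)"
proof -
  assume m: "1 \<le> m"
  have r: "(-1)^(m+1) / real m * real m = (-1)^(m-1)"
    using m by (cases "even (m-1)") (auto simp: neg_one_even_power neg_one_odd_power)
  have "cc m * of_nat m = cc m * fps_const (of_nat m)"
    by (simp only: fps_of_nat)
  also have "\<dots> = fps_const ([:(-1)^(m+1) / real m:] * of_nat m)"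
    by (simp only: cc_def fps_const_mult)
  also have "[:(-1)^(m+1) / real m:] * of_nat m = ([:(-1)^(m-1):] :: real poly)"
    using r by (simp add: of_nat_poly)
  also have "fps_const \<dots> = (-1)^(m-1)"
    by (cases "even (m-1)") (auto simp: neg_one_even_power neg_one_odd_power pm1)
  finally show ?thesis .
qed

lemma ydiff_sum: "ydiff (sum f S) = (\<Sum>i\<in>S. ydiff (f i))"
  by (rule fps_ext) (simp add: fps_sum_nth pderiv_sum')

lemma ydiff_zero [simp]: "ydiff 0 = 0"
  by (rule fps_ext) simp

lemma deriv_cc: "fps_deriv (cc k * F) = cc k * fps_deriv F"
  by (simp add: cc_def)

lemma ydiff_cc [simp]: "ydiff (cc m) = 0"
  by (simp add: cc_def)

lemma LN_deriv: "fps_deriv (LN N) = fps_deriv W * (\<Sum>i<N. (-W)^i)"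
proof (induct N)
  case 0 then show ?case by (simp add: LN_def)
next
  case (Suc N)
  have "fps_deriv (cc (Suc N) * W^(Suc N)) = (cc (Suc N) * of_nat (Suc N)) * fps_deriv W * W^N"
    by (simp only: deriv_cc fps_deriv_power' diff_Suc_1) (simp add: mult_ac)
  also have "\<dots> = fps_deriv W * (-W)^N"
    by (subst cc_mult) (simp_all add: power_minus[of W] mult_ac)
  finally have e: "fps_deriv (cc (Suc N) * W^(Suc N)) = fps_deriv W * (-W)^N" .
  have "LN (Suc N) = LN N + cc (Suc N) * W^(Suc N)" by (simp add: LN_def)
  then show ?case using Suc e by (simp add: distrib_left)
qed

lemma LN_ydiff: "ydiff (LN N) = ydiff W * (\<Sum>i<N. (-W)^i)"
proof (induct N)
  case 0 then show ?case by (simp add: LN_def)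
next
  case (Suc N)
  have "ydiff (cc (Suc N) * W^(Suc N)) = (cc (Suc N) * of_nat (Suc N)) * ydiff W * W^N"
    by (simp only: ydiff_mult ydiff_power diff_Suc_1 ydiff_cc) (simp add: mult_ac)
  also have "\<dots> = ydiff W * (-W)^N"
    by (subst cc_mult) (simp_all add: power_minus[of W] mult_ac)
  finally have e: "ydiff (cc (Suc N) * W^(Suc N)) = ydiff W * (-W)^N" .
  have "LN (Suc N) = LN N + cc (Suc N) * W^(Suc N)" by (simp add: LN_def)
  then show ?case using Suc e by (simp add: distrib_left)
qed

lemma geo: "(1+W) * (\<Sum>i<N. (-W)^i) = 1 - (-W)^N"
  using one_diff_power_eq[of "-W" N] by simp

lemma tail_zero: "(F * (-W)^(Suc n)) $ n = 0"
  unfolding fps_mult_nth by (rule sum.neutral) (simp add: mWpow_zero del: power_Suc)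

lemma L_nth [simp]: "L $ n = Q n" by (simp add: L_def)

lemma log_t: "(1+W) * fps_deriv L = fps_deriv (1+W)"
proof (rule fps_ext)
  fix n
  have "((1+W) * fps_deriv L) $ n = ((1+W) * fps_deriv (LN (Suc n))) $ n"
    by (rule mult_nth_cong) (simp add: LN_nth)
  also have "\<dots> = (fps_deriv W * (1 - (-W)^(Suc n))) $ n"
    by (simp only: LN_deriv geo mult.left_commute[of "1+W"])
  also have "\<dots> = fps_deriv W $ n"
    by (simp only: right_diff_distrib mult_1_right fps_sub_nth tail_zero diff_zero)
  finally show "((1+W) * fps_deriv L) $ n = fps_deriv (1+W) $ n" by simp
qed

lemma log_y: "(1+W) * ydiff L = ydiff (1+W)"
proof (rule fps_ext)
  fix n
  have "((1+W) * ydiff L) $ n = ((1+W) * ydiff (LN (Suc n))) $ n"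
    by (rule mult_nth_cong) (simp add: LN_nth)
  also have "\<dots> = (ydiff W * (1 - (-W)^(Suc n))) $ n"
    by (simp only: LN_ydiff geo mult.left_commute[of "1+W"])
  also have "\<dots> = ydiff W $ n"
    by (simp only: right_diff_distrib mult_1_right fps_sub_nth tail_zero diff_zero)
  finally show "((1+W) * ydiff L) $ n = ydiff (1+W) $ n" by simp
qed

lemma Lam_eq_L: "Lam = L"
proof -
  have nz: "(1+W :: real poly fps) \<noteq> 0"
  proof
    assume "1 + W = 0" then have "(1+W) $ 0 = 0" by simp
    then show False by simp
  qed
  have "(1+W) * fps_deriv Lam = (1+W) * fps_deriv L" using rec_fps log_t by simp
  then have d: "fps_deriv Lam = fps_deriv L" using nz by simp
  show ?thesis
  proof (rule fps_ext)
    fix n show "Lam $ n = L $ n"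
    proof (cases n)
      case 0 then show ?thesis by (simp add: Lam_nth Q_def)
    next
      case (Suc m)
      have "fps_deriv Lam $ m = fps_deriv L $ m" using d by simp
      then have "smult (real (Suc m)) (Lam $ Suc m) = smult (real (Suc m)) (L $ Suc m)"
        by (simp only: deriv_nth')
      then have "Lam $ Suc m = L $ Suc m" by (rule smult_cancel[rotated]) simp
      then show ?thesis using Suc by simp
    qed
  qed
qed



definition T :: "real poly fps \<Rightarrow> real poly fps" where
  "T F = - (fps_X * F) + fps_X * (fps_X * fps_deriv F) - fps_X * ydiff F"

definition Dop :: "real poly fps \<Rightarrow> real poly fps" where
  "Dop F = T F + ydiff F"

lemma T_add: "T (F + G) = T F + T G"
  by (simp add: T_def algebra_simps)

lemma Dop_add: "Dop (F + G) = Dop F + Dop G"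
  by (simp add: Dop_def T_add)

lemma ydiff_T: "ydiff (T F) = T (ydiff F)"
  by (simp add: T_def ydiff_mult ydiff_deriv)

lemma Dop_T: "Dop (T F) = T (Dop F)"
  by (simp add: Dop_def ydiff_T T_add)

lemma T_nth0 [simp]: "T F $ 0 = 0"
  by (simp add: T_def)

lemma ofnat_poly_mult1: "(1 + of_nat n :: real poly) * p = smult (1 + real n) p"
  using ofnat_poly_mult[of "Suc n" p] by simp

lemma T_nthSuc: "T F $ Suc m = - F $ m + smult (real m) (F $ m) - pderiv (F $ m)"
  by (cases m) (simp_all add: T_def ofnat_poly_mult1)

lemma E1: "1 + W = 1 + fps_const [:0,1:] * fps_X + fps_X * L + T (1 + W)"
proof (rule fps_ext)
  fix n show "(1 + W) $ n = (1 + fps_const [:0,1:] * fps_X + fps_X * L + T (1 + W)) $ n"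
  proof (cases n)
    case 0 then show ?thesis by simp
  next
    case (Suc m)
    show ?thesis
    proof (cases m)
      case 0
      have "P 0 = [:0,1:] - 1" by (simp add: one_pCons)
      then show ?thesis using Suc 0 by (simp add: T_nthSuc V_nth W_nth Q_def fps_X_def del: P.simps)
    next
      case (Suc k)
      have "(1 + fps_const [:0,1:] * fps_X + fps_X * L + T (1 + W)) $ Suc m
        = Lam $ m - P k + smult (real m) (P k) - pderiv (P k)"
        using Suc by (simp add: T_nthSuc W_nth Lam_eq_L)
      also have "\<dots> = P m" using Suc by (simp add: Lam_nth smult_diff_left smult_add_left algebra_simps)
      finally show ?thesis using \<open>n = Suc m\<close> by (simp add: W_nth)
    qed
  qed
qed

lemma h2: "Dop (1 + fps_const [:0,1:] * fps_X) = - (fps_X * fps_X)"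
proof -
  have "pderiv [:0,1::real:] = 1" by (simp add: pderiv_pCons)
  then show ?thesis by (simp add: Dop_def T_def ydiff_mult algebra_simps)
qed

lemma h3: "(1+W) * Dop (fps_X * L) = fps_X * (Dop (1+W) + fps_X * (1+W))"
proof -
  have "(1+W) * Dop (fps_X * L) = fps_X * fps_X * fps_X * ((1+W) * fps_deriv L) + fps_X * (1 - fps_X) * ((1+W) * ydiff L)"
    by (simp add: Dop_def T_def ydiff_mult algebra_simps)
  also have "\<dots> = fps_X * fps_X * fps_X * fps_deriv (1+W) + fps_X * (1 - fps_X) * ydiff (1+W)"
    by (simp only: log_t log_y)
  also have "\<dots> = fps_X * (Dop (1+W) + fps_X * (1+W))"
    by (simp add: Dop_def T_def algebra_simps)
  finally show ?thesis .
qed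

lemma Psi_eq: "(1+W) * Dop (1+W) = fps_X * Dop (1+W) + (1+W) * T (Dop (1+W))"
proof -
  have "Dop (1+W) = Dop (1 + fps_const [:0,1:] * fps_X + fps_X * L + T (1 + W))"
    by (rule arg_cong[where f=Dop, OF E1])
  also have "\<dots> = - (fps_X * fps_X) + Dop (fps_X * L) + T (Dop (1+W))"
    by (simp only: Dop_add[of "1 + fps_const [:0,1:] * fps_X + fps_X * L"]
        Dop_add[of "1 + fps_const [:0,1:] * fps_X"] Dop_T h2)
  finally have e: "Dop (1+W) = - (fps_X * fps_X) + Dop (fps_X * L) + T (Dop (1+W))" .
  have "(1+W) * Dop (1+W) = - (fps_X * fps_X) * (1+W) + (1+W) * Dop (fps_X * L) + (1+W) * T (Dop (1+W))"
    by (subst e) (simp add: algebra_simps)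
  also have "\<dots> = fps_X * Dop (1+W) + (1+W) * T (Dop (1+W))"
    by (simp only: h3) (simp add: algebra_simps)
  finally show ?thesis .
qed

lemma Psi_zero: "Dop (1+W) = 0"
proof -
  define Psi where "Psi = Dop (1+W)"
  have eq: "(1+W) * Psi = fps_X * Psi + (1+W) * T Psi" using Psi_eq by (simp add: Psi_def)
  have "Psi $ n = 0" for n
  proof (induct n rule: less_induct)
    case (less n)
    have a: "((1+W) * Psi) $ n = Psi $ n"
    proof -
      have "((1+W) * Psi) $ n = (\<Sum>i=0..n. (1+W)$i * Psi$(n-i))" by (simp add: fps_mult_nth)
      also have "\<dots> = (\<Sum>i\<in>{0}. (1+W)$i * Psi$(n-i))"
        by (rule sum.mono_neutral_right) (auto simp: less)
      finally show ?thesis by simp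
    qed
    have b: "(fps_X * Psi) $ n = 0" using less by simp
    have c: "((1+W) * T Psi) $ n = 0"
    proof -
      have "T Psi $ j = 0" if "j \<le> n" for j
        using that less by (cases j) (auto simp: T_nthSuc)
      then show ?thesis by (simp add: fps_mult_nth)
    qed
    show ?case using arg_cong[where f="\<lambda>F. F $ n", OF eq] a b c by simp
  qed
  then show ?thesis by (simp add: Psi_def fps_ext)
qed

lemma J: "1 \<le> n \<Longrightarrow> pderiv (P n) = pderiv (P (n-1)) - smult (real n - 1) (P (n-1))"
proof -
  assume n: "1 \<le> n"
  have "Dop (1+W) $ Suc n = 0" by (simp add: Psi_zero)
  then have "- P (n-1) + smult (real n) (P (n-1)) - pderiv (P (n-1)) + pderiv (P n) = 0"
    using n by (simp add: Dop_def T_nthSuc W_nth)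
  then show ?thesis by (simp add: smult_diff_left algebra_simps)
qed



lemma I1: "1 \<le> n \<Longrightarrow> P n = smult (real n - 1) (P (n-1)) - pderiv (P (n-1)) + Q n"
  using arg_cong[where f="\<lambda>F. F $ n", OF Lam_eq_L] by (simp add: Lam_nth)

lemma I2: "1 \<le> n \<Longrightarrow> Q n = P n + pderiv (P n)"
  using I1[of n] J[of n] by (simp add: algebra_simps)

definition fl :: "real poly \<Rightarrow> real poly" where "fl p = pcompose p [:0,-1:]"

lemma coeff_fl: "coeff (fl p) i = (-1)^i * coeff p i"
  by (simp add: fl_def coeff_pcompose_linear)

lemma fl_pderiv: "fl (pderiv p) = - pderiv (fl p)"
proof -
  have d: "pderiv (pCons 0 (-1 :: real poly)) = -1" by (simp add: pderiv_pCons pderiv_minus)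
  show ?thesis unfolding fl_def pderiv_pcompose by (simp add: pm1 d)
qed

lemma fl_add: "fl (p + q) = fl p + fl q" by (simp add: fl_def pcompose_add)
lemma fl_diff: "fl (p - q) = fl p - fl q" by (simp add: fl_def pcompose_diff)
lemma fl_smult: "fl (smult c p) = smult c (fl p)" by (simp add: fl_def pcompose_smult)
lemma fl_mult: "fl (p * q) = fl p * fl q" by (simp add: fl_def pcompose_mult)
lemma fl_sum: "fl (sum f A) = (\<Sum>i\<in>A. fl (f i))" by (simp add: fl_def pcompose_sum)
lemma fl_0 [simp]: "fl 0 = 0" by (simp add: fl_def)
lemma fl_1 [simp]: "fl 1 = 1" by (simp add: fl_def pcompose_1)

definition Xp :: "nat \<Rightarrow> real poly" where "Xp n = - fl (P n)"
definition Qt :: "nat \<Rightarrow> real poly" where "Qt n = - fl (Q n)"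
definition Y :: "real poly fps" where "Y = Abs_fps (\<lambda>i. if i = 0 then 0 else Xp (i-1))"

definition FL :: "real poly fps \<Rightarrow> real poly fps" where "FL F = Abs_fps (\<lambda>n. fl (F $ n))"

lemma FL_nth [simp]: "FL F $ n = fl (F $ n)" by (simp add: FL_def)

lemma FL_mult: "FL (F * G) = FL F * FL G"
  by (rule fps_ext) (simp add: fps_mult_nth fl_sum fl_mult)

lemma FL_one: "FL 1 = 1"
  by (rule fps_ext) simp

lemma FL_power: "FL (F ^ m) = FL F ^ m"
  by (induct m) (simp_all add: FL_one FL_mult)

lemma FL_W: "FL W = - Y"
  by (rule fps_ext) (simp add: W_nth Y_def Xp_def)

lemma Qt_formula: "Qt n = (\<Sum>m\<in>{1..n}. smult (1 / real m) ((Y^m) $ n))"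
proof -
  have e: "fl ((W^m) $ n) = smult ((-1)^m) ((Y^m) $ n)" for m
  proof -
    have "fl ((W^m) $ n) = (FL (W^m)) $ n" by simp
    also have "\<dots> = ((-Y)^m) $ n" by (simp only: FL_power FL_W)
    also have "\<dots> = smult ((-1)^m) ((Y^m) $ n)"
      by (cases "even m") (simp_all add: power_minus[of Y])
    finally show ?thesis .
  qed
  have "Qt n = - (\<Sum>m\<in>{1..n}. smult ((-1)^(m+1) / real m) (smult ((-1)^m) ((Y^m) $ n)))"
    by (simp only: Qt_def Q_def fl_sum fl_smult e)
  also have "\<dots> = (\<Sum>m\<in>{1..n}. smult (1 / real m) ((Y^m) $ n))"
    by (simp add: sum_negf[symmetric] smult_smult power_add)
  finally show ?thesis .
qed



definition nonneg :: "real poly \<Rightarrow> bool" where "nonneg p \<longleftrightarrow> (\<forall>i. coeff p i \<ge> 0)"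

lemma nonneg_add: "nonneg p \<Longrightarrow> nonneg q \<Longrightarrow> nonneg (p + q)"
  by (simp add: nonneg_def)
lemma nonneg_smult: "c \<ge> 0 \<Longrightarrow> nonneg p \<Longrightarrow> nonneg (smult c p)"
  by (simp add: nonneg_def)
lemma nonneg_pderiv: "nonneg p \<Longrightarrow> nonneg (pderiv p)"
  by (simp add: nonneg_def coeff_pderiv)
lemma nonneg_mult: "nonneg p \<Longrightarrow> nonneg q \<Longrightarrow> nonneg (p * q)"
  by (simp add: nonneg_def coeff_mult sum_nonneg)
lemma nonneg_sum: "(\<And>i. i \<in> A \<Longrightarrow> nonneg (f i)) \<Longrightarrow> nonneg (sum f A)"
  by (simp add: nonneg_def coeff_sum sum_nonneg)
lemma nonneg_0: "nonneg 0" by (simp add: nonneg_def)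

lemma nonneg_pow: "(\<And>i. i \<le> n \<Longrightarrow> nonneg (F$i)) \<Longrightarrow> k \<le> n \<Longrightarrow> nonneg ((F^m)$k)"
proof (induct m arbitrary: k)
  case 0 then show ?case by (simp add: nonneg_def coeff_1)
next
  case (Suc m)
  show ?case unfolding power_Suc fps_mult_nth
    by (rule nonneg_sum, rule nonneg_mult) (use Suc in auto)
qed

lemma Xp_rec: "1 \<le> n \<Longrightarrow> Xp n = smult (real n - 1) (Xp (n-1)) + pderiv (Xp (n-1)) + Qt n"
proof -
  assume n: "1 \<le> n"
  show ?thesis unfolding Xp_def Qt_def I1[OF n]
    by (simp add: fl_add fl_diff fl_smult fl_pderiv pderiv_minus)
qed

lemma Qt_I2: "1 \<le> n \<Longrightarrow> Qt n = Xp n - pderiv (Xp n)"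
  by (simp add: Qt_def Xp_def I2 fl_add fl_pderiv pderiv_minus)

lemma Xp_nonneg: "nonneg (Xp n)"
proof (induct n rule: less_induct)
  case (less n)
  show ?case
  proof (cases n)
    case 0
    have "coeff (Xp 0) i \<ge> 0" for i
    proof -
      have "i = 0 \<or> i = Suc 0 \<or> (\<exists>k. i = Suc (Suc k))" by presburger
      then show ?thesis by (auto simp: Xp_def coeff_fl)
    qed
    then show ?thesis using 0 by (simp add: nonneg_def)
  next
    case (Suc m)
    have Y: "nonneg (Y $ i)" if "i \<le> n" for i
      using that less Suc by (cases i) (auto simp: Y_def nonneg_0)
    have "nonneg (Qt n)" unfolding Qt_formula
      by (rule nonneg_sum, rule nonneg_smult) (auto intro: nonneg_pow Y)
    then show ?thesis using Suc less
      by (subst Xp_rec) (auto intro!: nonneg_add nonneg_smult nonneg_pderiv)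
  qed
qed

lemma Qt_nonneg: "nonneg (Qt n)"
proof -
  have Y: "nonneg (Y $ i)" for i
    by (cases i) (auto simp: Y_def nonneg_0 Xp_nonneg)
  show ?thesis unfolding Qt_formula
    by (rule nonneg_sum, rule nonneg_smult) (auto intro: nonneg_pow Y)
qed



lemma Jc: "1 \<le> n \<Longrightarrow> real (Suc i) * coeff (P n) (Suc i)
   = real (Suc i) * coeff (P (n-1)) (Suc i) - (real n - 1) * coeff (P (n-1)) i"
proof -
  assume n: "1 \<le> n"
  have "coeff (pderiv (P n)) i = coeff (pderiv (P (n-1)) - smult (real n - 1) (P (n-1))) i"
    using J[OF n] by simp
  then show ?thesis by (simp add: coeff_pderiv)
qed

lemma lead: "1 \<le> n \<Longrightarrow> (\<forall>i>n. coeff (P n) i = 0) \<and> coeff (P n) n = (-1)^(n+1) / real n"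
proof (induct n rule: nat_induct_at_least)
  case base
  have "coeff (P 1) (Suc i) = (if i = 0 then 1 else 0)" for i
    using Jc[of 1 i] by (cases i) (simp_all del: P.simps add: P.simps(1))
  then have c: "coeff (P 1) (Suc i) = (if i = 0 then 1 else 0)" for i by blast
  have "\<forall>i>1. coeff (P 1) i = 0"
  proof (intro allI impI)
    fix i :: nat assume "1 < i"
    then obtain k where "i = Suc k" "k \<noteq> 0" by (cases i) auto
    then show "coeff (P 1) i = 0" using c[of k] by simp
  qed
  moreover have "coeff (P 1) 1 = (-1)^(1+1) / real 1" using c[of 0] by simp
  ultimately show ?case by simp
next
  case (Suc n)
  have A: "coeff (P (Suc n)) i = 0" if gt: "i > Suc n" for i
  proof -
    obtain k where k: "i = Suc k" "k > n" using gt by (cases i) auto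
    have "real (Suc k) * coeff (P (Suc n)) (Suc k) = 0"
      using Jc[of "Suc n" k] Suc k by simp
    then show ?thesis using k by simp
  qed
  have "real (Suc n) * coeff (P (Suc n)) (Suc n) = - (real n) * ((-1)^(n+1) / real n)"
    using Jc[of "Suc n" n] Suc by simp
  then have "coeff (P (Suc n)) (Suc n) = (-1)^(Suc n + 1) / real (Suc n)"
    using Suc(1) by (simp add: field_simps del: of_nat_Suc)
  with A show ?case by blast
qed

definition intp :: "real poly \<Rightarrow> bool" where "intp p \<longleftrightarrow> (\<forall>i. coeff p i \<in> \<int>)"

lemma intp_add: "intp p \<Longrightarrow> intp q \<Longrightarrow> intp (p + q)" by (simp add: intp_def)
lemma intp_diff: "intp p \<Longrightarrow> intp q \<Longrightarrow> intp (p - q)" by (simp add: intp_def)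
lemma intp_smult: "intp p \<Longrightarrow> intp (smult (real m) p)" by (simp add: intp_def)
lemma intp_pderiv: "intp p \<Longrightarrow> intp (pderiv p)" by (simp add: intp_def coeff_pderiv)
lemma intp_mult: "intp p \<Longrightarrow> intp q \<Longrightarrow> intp (p * q)"
  by (simp add: intp_def coeff_mult Ints_sum Ints_mult)
lemma intp_sum: "(\<And>i. i \<in> A \<Longrightarrow> intp (f i)) \<Longrightarrow> intp (sum f A)"
  by (simp add: intp_def coeff_sum Ints_sum)

lemma smult_sum2: "smult c (sum f S) = (\<Sum>i\<in>S. smult c (f i))"
  by (induct S rule: infinite_finite_induct) (auto simp: smult_add_right)

lemma fact_split: "k \<le> j \<Longrightarrow> (fact j :: real) = real (j choose k) * fact k * fact (j - k)"
  by (simp add: binomial_fact field_simps)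

lemma int_all: "intp (smult (fact n) (P n)) \<and> intp (smult (fact n) (Lam $ n))"
proof (induct n rule: less_induct)
  case (less n)
  show ?case
  proof (cases n)
    case 0
    have "coeff (P 0) i \<in> \<int>" for i
    proof -
      have "i = 0 \<or> i = Suc 0 \<or> (\<exists>k. i = Suc (Suc k))" by presburger
      then show ?thesis by auto
    qed
    then show ?thesis using 0 by (simp add: intp_def Lam_nth)
  next
    case (Suc j)
    have IHp: "intp (smult (fact i) (P i))" if "i \<le> j" for i using less Suc that by auto
    have IHl: "intp (smult (fact i) (Lam $ i))" if "i \<le> j" for i using less Suc that by auto
    have e1: "smult (fact (Suc j)) (Lam $ Suc j) = smult (real (Suc j)) (smult (fact j) (P j))
       - (\<Sum>k\<in>{1..j}. smult (real k * real (j choose k)) (smult (fact k) (Lam $ k) * smult (fact (j-k)) (P (j - k))))"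
    proof -
      have "smult (fact j) (smult (real j + 1) (Lam $ Suc j)) = smult (fact j) (smult (real j + 1) (P j))
          - smult (fact j) (\<Sum>k\<in>{1..j}. smult (real k) (Lam $ k * P (j - k)))"
      proof -
        have r: "smult (fact j) (smult (real j + 1) (Lam $ Suc j) + (\<Sum>k\<in>{1..j}. smult (real k) (Lam $ k * P (j - k))))
           = smult (fact j) (smult (real j + 1) (P j))"
          using rec_coeff[of j] by simp
        show ?thesis using r by (simp only: smult_add_right eq_diff_eq)
      qed
      also have "smult (fact j) (\<Sum>k\<in>{1..j}. smult (real k) (Lam $ k * P (j - k)))
         = (\<Sum>k\<in>{1..j}. smult (real k * real (j choose k)) (smult (fact k) (Lam $ k) * smult (fact (j-k)) (P (j - k))))"
        unfolding smult_sum2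
      proof (rule sum.cong[OF refl])
        fix k assume "k \<in> {1..j}"
        then have kj: "k \<le> j" by simp
        show "smult (fact j) (smult (real k) (Lam $ k * P (j - k))) =
          smult (real k * real (j choose k)) (smult (fact k) (Lam $ k) * smult (fact (j - k)) (P (j - k)))"
          by (simp add: smult_smult fact_split[OF kj] mult_ac)
      qed
      finally show ?thesis by (simp add: smult_smult mult_ac add.commute)
    qed
    have il: "intp (smult (fact (Suc j)) (Lam $ Suc j))"
      unfolding e1
    proof (rule intp_diff)
      show "intp (smult (real (Suc j)) (smult (fact j) (P j)))" by (intro intp_smult IHp) simp
      show "intp (\<Sum>k\<in>{1..j}. smult (real k * real (j choose k)) (smult (fact k) (Lam $ k) * smult (fact (j-k)) (P (j - k))))"
      proof (rule intp_sum)
        fix k assume k: "k \<in> {1..j}"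
        have "intp (smult (real (k * (j choose k))) (smult (fact k) (Lam $ k) * smult (fact (j-k)) (P (j - k))))"
          using k by (intro intp_smult intp_mult IHl IHp) auto
        then show "intp (smult (real k * real (j choose k)) (smult (fact k) (Lam $ k) * smult (fact (j-k)) (P (j - k))))"
          by simp
      qed
    qed
    have e2: "smult (fact (Suc j)) (P (Suc j)) = smult (fact (Suc j)) (Lam $ Suc j)
        + smult (real (Suc j * j)) (smult (fact j) (P j)) - smult (real (Suc j)) (pderiv (smult (fact j) (P j)))"
      by (simp add: Lam_nth smult_add_right smult_diff_right smult_smult pderiv_smult algebra_simps)
    have ip: "intp (smult (fact (Suc j)) (P (Suc j)))"
      unfolding e2 by (intro intp_diff intp_add intp_smult intp_pderiv il IHp) auto
    show ?thesis using il ip Suc by simp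
  qed
qed



lemma sign: "k \<le> n \<Longrightarrow> (-1::real)^(n+1+k) = - ((-1)^(n-k))"
proof -
  assume "k \<le> n"
  then obtain j where n: "n = j + k" by (metis le_add_diff_inverse2)
  have "(-1::real)^(n+1+k) = (-1)^j * ((-1)^(2*k) * (-1))"
    by (simp add: n power_add mult_2 algebra_simps)
  then show ?thesis by (simp add: n power_mult)
qed

lemma sign2: "k \<le> n \<Longrightarrow> (-1::real)^(n+k) = (-1)^(n-k)"
proof -
  assume "k \<le> n"
  then obtain j where n: "n = j + k" by (metis le_add_diff_inverse2)
  have "(-1::real)^(n+k) = (-1)^j * (-1)^(2*k)"
    by (simp only: n power_add mult_2 add.assoc)
  then show ?thesis by (simp add: n power_mult)
qed

lemma coeff_Xp: "coeff (Xp n) j = - ((-1)^j * coeff (P n) j)"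
  by (simp add: Xp_def coeff_fl)

lemma coeff_Qt: "coeff (Qt n) j = - ((-1)^j * coeff (Q n) j)"
  by (simp add: Qt_def coeff_fl)

lemma a_eq: "k \<le> n \<Longrightarrow> a n k = fact n * coeff (Xp n) (n-k)"
  by (simp add: a_def coeff_Xp sign2)

lemma b_eq: "k \<le> n \<Longrightarrow> b n k = fact n * coeff (Qt n) (n-k)"
  by (simp add: b_def coeff_Qt sign2)

lemma Xint: "fact n * coeff (Xp n) i \<in> \<int>"
proof -
  have "coeff (smult (fact n) (P n)) i \<in> \<int>" using int_all[of n] by (simp add: intp_def)
  then have "- ((-1)^i * coeff (smult (fact n) (P n)) i) \<in> \<int>" by (simp add: Ints_mult)
  then show ?thesis by (simp add: coeff_Xp mult_ac)
qed

lemma coeff_Qt2: "1 \<le> n \<Longrightarrow> coeff (Qt n) j = coeff (Xp n) j - real (Suc j) * coeff (Xp n) (Suc j)"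
  by (simp add: Qt_I2 coeff_pderiv)

theorem theorem4p10:
  fixes n k :: nat
  assumes "1 \<le> n" and "k \<le> n"
  shows "b n k \<in> \<int> \<and> a n k \<ge> 0 \<and> b n k \<ge> 0
         \<and> (1 \<le> k \<longrightarrow> a n (k - 1) \<le> a n k)
         \<and> a n 0 = fact (n - 1)"
proof -
  define j where "j = n - k"
  have bj: "b n k = fact n * coeff (Xp n) j - real (Suc j) * (fact n * coeff (Xp n) (Suc j))"
    using assms by (simp add: b_eq coeff_Qt2 j_def algebra_simps)
  have i1: "b n k \<in> \<int>"
    unfolding bj by (intro Ints_diff Ints_mult Xint) simp
  have i2: "a n k \<ge> 0"
    using assms Xp_nonneg[of n] by (simp add: a_eq nonneg_def)
  have i3: "b n k \<ge> 0"
    using assms Qt_nonneg[of n] by (simp add: b_eq nonneg_def)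
  have i4: "a n (k - 1) \<le> a n k" if k1: "1 \<le> k"
  proof -
    have ak1: "a n (k-1) = fact n * coeff (Xp n) (Suc j)"
      using assms k1 by (simp add: a_eq j_def Suc_diff_le)
    have ak: "a n k = fact n * coeff (Xp n) j" using assms by (simp add: a_eq j_def)
    have "a n (k-1) \<ge> 0" unfolding ak1 using Xp_nonneg[of n] by (simp add: nonneg_def)
    moreover have "a n k = b n k + real (Suc j) * a n (k-1)" using bj ak ak1 by simp
    moreover have "real (Suc j) * a n (k-1) \<ge> 1 * a n (k-1)"
      by (rule mult_right_mono) (use \<open>a n (k-1) \<ge> 0\<close> in auto)
    ultimately show ?thesis using i3 by linarith
  qed
  have i5: "a n 0 = fact (n - 1)"
  proof -
    have l: "coeff (P n) n = (-1)^(n+1) / real n" using lead[OF assms(1)] by blast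
    have "a n 0 = fact n * (- ((-1)^n * ((-1)^(n+1) / real n)))"
      by (simp add: a_eq coeff_Xp l)
    also have "\<dots> = fact n / real n" by (simp add: power_add)
    also have "\<dots> = fact (n - 1)"
    proof -
      have f: "(fact n :: real) = real n * fact (n - 1)" using assms(1) fact_reduce[of n] by simp
      have "real n \<noteq> 0" using assms(1) by simp
      then show ?thesis by (simp add: f)
    qed
    finally show ?thesis .
  qed
  show ?thesis using i1 i2 i3 i4 i5 by blast
qed

end
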